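(* Let $\Sigma\subset Z$ be a centred curve of bidegree $(k,k)$. If a point $(w,z)\in\Sigma$ is fixed by a nontrivial rotation of $H^3$ preserving $(0,0,1)$, then $w=z$.
   Context: $H^3$ is the upper half-space model; $\hat w=-1/\bar w$; $Z=\mathbb{P}^1\times\mathbb{P}^1\setminus\{\hat w=z\}$ is the space of oriented geodesics, $(w,z)$ the geodesic from $\hat w$ to $z$; isometries act on $Z$ through their action on endpoints. A curve given by $(-w)^k\langle q(\hat w),q(z)\rangle=0$ with $q(z)=\sum_j\sqrt{\binom kj}z^jv_j$, $v_j\in\mathbb{C}^{k+1}$, is centred if $\sum_j(2j-k)\|v_j\|^2=0$ and $\sum_j\sqrt{(j+1)(k-j)}\langle v_j,v_{j+1}\rangle=0$. *)

theory Defs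
  imports Complex_Main
begin

(* Points of P^1 are given by homogeneous coordinates (x0,x1) \<noteq> (0,0);
   the affine coordinate is x0/x1, so [z:1] is z and [1:0] is \<infinity>. *)

definition proj_eq :: "complex \<times> complex \<Rightarrow> complex \<times> complex \<Rightarrow> bool" where
  "proj_eq x y \<longleftrightarrow> (\<exists>l. l \<noteq> 0 \<and> fst x = l * fst y \<and> snd x = l * snd y)"

(* antipodal map  w \<mapsto> -1/conj w  in homogeneous coordinates *)
definition hat :: "complex \<times> complex \<Rightarrow> complex \<times> complex" where
  "hat x = (- cnj (snd x), cnj (fst x))"

(* the space Z of oriented geodesics: (w,z) with hat w \<noteq> z *)
definition inZ :: "complex \<times> complex \<Rightarrow> complex \<times> complex \<Rightarrow> bool" where
  "inZ w z \<longleftrightarrow> w \<noteq> (0,0) \<and> z \<noteq> (0,0) \<and> \<not> proj_eq (hat w) z"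

(* homogenised q(z) = \<Sum>_j sqrt(k choose j) z^j v_j ; vectors v_j \<in> C^(k+1) are v j :: nat \<Rightarrow> complex
   with components l = 0..k *)
definition qvec :: "nat \<Rightarrow> (nat \<Rightarrow> nat \<Rightarrow> complex) \<Rightarrow> complex \<times> complex \<Rightarrow> nat \<Rightarrow> complex" where
  "qvec k v x l = (\<Sum>j\<le>k. complex_of_real (sqrt (real (k choose j))) * fst x ^ j * snd x ^ (k - j) * v j l)"

definition herm :: "nat \<Rightarrow> (nat \<Rightarrow> complex) \<Rightarrow> (nat \<Rightarrow> complex) \<Rightarrow> complex" where
  "herm k a b = (\<Sum>l\<le>k. cnj (a l) * b l)"

(* bihomogeneous form of bidegree (k,k) defining the curve, i.e. (-w)^k <q(hat w), q(z)> *)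
definition curve_form :: "nat \<Rightarrow> (nat \<Rightarrow> nat \<Rightarrow> complex) \<Rightarrow> complex \<times> complex \<Rightarrow> complex \<times> complex \<Rightarrow> complex" where
  "curve_form k v w z = herm k (qvec k v (hat w)) (qvec k v z)"

definition curve :: "nat \<Rightarrow> (nat \<Rightarrow> nat \<Rightarrow> complex) \<Rightarrow> ((complex \<times> complex) \<times> (complex \<times> complex)) set" where
  "curve k v = {(w, z). inZ w z \<and> curve_form k v w z = 0}"

definition is_curve :: "nat \<Rightarrow> (nat \<Rightarrow> nat \<Rightarrow> complex) \<Rightarrow> bool" where
  "is_curve k v \<longleftrightarrow> k \<ge> 1 \<and> (\<exists>w z. curve_form k v w z \<noteq> 0)"

definition centred :: "nat \<Rightarrow> (nat \<Rightarrow> nat \<Rightarrow> complex) \<Rightarrow> bool" where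
  "centred k v \<longleftrightarrow>
     (\<Sum>j\<le>k. (2 * real j - real k) * (\<Sum>l\<le>k. (cmod (v j l))\<^sup>2)) = 0 \<and>
     (\<Sum>j<k. complex_of_real (sqrt (real ((j + 1) * (k - j)))) * herm k (v j) (v (j + 1))) = 0"

definition mob :: "complex \<Rightarrow> complex \<Rightarrow> complex \<Rightarrow> complex \<Rightarrow> complex \<times> complex \<Rightarrow> complex \<times> complex" where
  "mob a b c d x = (a * fst x + b * snd x, c * fst x + d * snd x)"

(* Poincare extension to H^3 = {(x,t) : x \<in> C, t > 0} (point x + t j) *)
definition poinc :: "complex \<Rightarrow> complex \<Rightarrow> complex \<Rightarrow> complex \<Rightarrow> complex \<times> real \<Rightarrow> complex \<times> real" where
  "poinc a b c d p = (let x = fst p; t = snd p;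
      N = (cmod (c * x + d))\<^sup>2 + (cmod c)\<^sup>2 * t\<^sup>2
    in (((a * x + b) * cnj (c * x + d) + a * cnj c * complex_of_real (t\<^sup>2)) / complex_of_real N, t / N))"

definition nontriv_rotation :: "complex \<Rightarrow> complex \<Rightarrow> complex \<Rightarrow> complex \<Rightarrow> bool" where
  "nontriv_rotation a b c d \<longleftrightarrow> a * d - b * c = 1 \<and> poinc a b c d (0, 1) = (0, 1) \<and>
     (\<exists>p. snd p > 0 \<and> poinc a b c d p \<noteq> p)"

(* action on Z: the geodesic from hat w to z goes to the one from g(hat w) to g z *)
definition fixes_Z :: "complex \<Rightarrow> complex \<Rightarrow> complex \<Rightarrow> complex \<Rightarrow> complex \<times> complex \<Rightarrow> complex \<times> complex \<Rightarrow> bool" where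
  "fixes_Z a b c d w z \<longleftrightarrow> proj_eq (hat (mob a b c d (hat w))) w \<and> proj_eq (mob a b c d z) z"

end

theory Submission
  imports Defs
begin

lemma proj_eq_iff:
  assumes "x \<noteq> (0,0)" "y \<noteq> (0,0)"
  shows "proj_eq x y \<longleftrightarrow> fst x * snd y = snd x * fst y"
proof (cases x, cases y)
  fix x0 x1 y0 y1 assume X: "x = (x0,x1)" and Y: "y = (y0,y1)"
  show ?thesis
  proof
    assume "proj_eq x y" then show "fst x * snd y = snd x * fst y"
      unfolding proj_eq_def by auto
  next
    assume E: "fst x * snd y = snd x * fst y"
    hence E': "x0 * y1 = x1 * y0" using X Y by simp
    show "proj_eq x y"
    proof (cases "y0 = 0")
      case True
      hence "y1 \<noteq> 0" using assms(2) Y by auto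
      moreover have "x0 = 0" using E' True \<open>y1 \<noteq> 0\<close> by simp
      moreover hence "x1 \<noteq> 0" using assms(1) X by auto
      ultimately show ?thesis unfolding proj_eq_def using X Y True
        by (intro exI[of _ "x1/y1"]) auto
    next
      case False
      have "x0 \<noteq> 0"
      proof
        assume "x0 = 0" then have "x1 = 0" using E' False by simp
        with \<open>x0 = 0\<close> assms(1) X show False by auto
      qed
      have "x1 = x0 / y0 * y1" using E' False by (simp add: field_simps)
      then show ?thesis unfolding proj_eq_def using X Y False \<open>x0 \<noteq> 0\<close>
        by (intro exI[of _ "x0/y0"]) auto
    qed
  qed
qed

lemma unit_id:
  fixes a b c d p q x y ca cb cc cd cp cq :: complex
  assumes "a = cd" "b = - cc" "ca = d" "cb = - c" "c*cc + d*cd = 1"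
  shows "(ca*cp + cb*cq) * (a*x + b*y) + (cc*cp + cd*cq) * (c*x + d*y)
        = cp*x + cq*y"
proof -
  have "(ca*cp + cb*cq) * (a*x + b*y) + (cc*cp + cd*cq) * (c*x + d*y)
     = (cp*x + cq*y) * (c*cc + d*cd)"
    using assms(1-4) by (simp add: algebra_simps)
  then show ?thesis using assms(5) by simp
qed

theorem mainTheorem6:
  fixes k :: nat and v :: "nat \<Rightarrow> nat \<Rightarrow> complex"
    and a b c d :: complex and w z :: "complex \<times> complex"
  assumes "is_curve k v" and "centred k v"
    and "(w, z) \<in> curve k v"
    and "nontriv_rotation a b c d"
    and "fixes_Z a b c d w z"
  shows "proj_eq w z"
proof -
  obtain w0 w1 where W: "w = (w0,w1)" by (cases w)
  obtain z0 z1 where Z: "z = (z0,z1)" by (cases z)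
  have iz: "inZ w z" using assms(3) unfolding curve_def by auto
  have wn: "w \<noteq> (0,0)" and zn: "z \<noteq> (0,0)" and np: "\<not> proj_eq (hat w) z"
    using iz unfolding inZ_def by auto
  have det: "a*d - b*c = 1" and P: "poinc a b c d (0,1) = (0,1)"
    and mv: "\<exists>p. snd p > 0 \<and> poinc a b c d p \<noteq> p"
    using assms(4) unfolding nontriv_rotation_def by auto
  define N where "N = (cmod d)\<^sup>2 + (cmod c)\<^sup>2"
  have PP: "poinc a b c d (0,1) = ((b*cnj d + a*cnj c)/complex_of_real N, 1/N)"
    unfolding poinc_def N_def by (simp add: Let_def)
  have P1: "(b * cnj d + a * cnj c) / complex_of_real N = 0"
    and P2: "1 / N = 1"
    using P PP by auto
  have N1: "N = 1" using P2 by (simp add: divide_eq_1_iff)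
  have orth: "b * cnj d + a * cnj c = 0" using P1 N1 by simp
  have cc: "c * cnj c + d * cnj d = 1"
  proof -
    have "c * cnj c + d * cnj d = complex_of_real N"
      unfolding N_def of_real_add complex_norm_square by simp
    then show ?thesis using N1 by simp
  qed
  have ha: "a = cnj d"
  proof -
    have "a = a * (c * cnj c + d * cnj d)" using cc by simp
    also have "\<dots> = cnj d * (a*d - b*c) + c * (b * cnj d + a * cnj c)"
      by (simp add: algebra_simps)
    also have "\<dots> = cnj d" using det orth by simp
    finally show ?thesis .
  qed
  have hb: "b = - cnj c"
  proof -
    have "b = b * (c * cnj c + d * cnj d)" using cc by simp
    also have "\<dots> = - cnj c * (a*d - b*c) + d * (b * cnj d + a * cnj c)"
      by (simp add: algebra_simps)
    also have "\<dots> = - cnj c" using det orth by simp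
    finally show ?thesis .
  qed
  define u0 where "u0 = - cnj w1"
  define u1 where "u1 = cnj w0"
  have hw: "hat w = (u0,u1)" unfolding hat_def u0_def u1_def W by simp
  have un: "(u0,u1) \<noteq> (0,0)" using wn W u0_def u1_def by auto
  obtain l where l: "l \<noteq> 0" "fst (hat (mob a b c d (hat w))) = l * w0"
      "snd (hat (mob a b c d (hat w))) = l * w1"
    using assms(5) W unfolding fixes_Z_def proj_eq_def by auto
  define lam where "lam = - cnj l"
  have e1: "a*u0 + b*u1 = lam * u0" and e2: "c*u0 + d*u1 = lam * u1"
  proof -
    have A: "- cnj (c*u0 + d*u1) = l * w0" and B: "cnj (a*u0 + b*u1) = l * w1"
      using l hw unfolding hat_def mob_def by auto
    from B have "a*u0 + b*u1 = cnj (l * w1)" by (metis complex_cnj_cnj)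
    then show "a*u0 + b*u1 = lam * u0" unfolding lam_def u0_def by simp
    from A have "c*u0 + d*u1 = - cnj (l * w0)" by (metis complex_cnj_cnj complex_cnj_minus minus_minus)
    then show "c*u0 + d*u1 = lam * u1" unfolding lam_def u1_def by simp
  qed
  obtain m where m: "m \<noteq> 0" "a*z0 + b*z1 = m * z0" "c*z0 + d*z1 = m * z1"
    using assms(5) Z unfolding fixes_Z_def proj_eq_def mob_def by auto
  have indep: "u0 * z1 - u1 * z0 \<noteq> 0"
    using np proj_eq_iff[OF un zn] hw Z by auto
  define s where "s = cnj u0 * z0 + cnj u1 * z1"
  have s0: "s = 0"
  proof (rule ccontr)
    assume sn: "s \<noteq> 0"
    have "cnj (a*u0 + b*u1) * (a*z0 + b*z1) + cnj (c*u0 + d*u1) * (c*z0 + d*z1) = s"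
      unfolding s_def using unit_id[where ca="cnj a" and cb="cnj b" and cc="cnj c" and cd="cnj d" and cp="cnj u0" and cq="cnj u1" and x=z0 and y=z1]
      using ha hb cc by simp
    hence "cnj lam * m * s = s" unfolding s_def using e1 e2 m
      by (simp add: algebra_simps)
    hence lm: "cnj lam * m = 1" using sn
      by (metis mult_1 mult_cancel_right)
    define r where "r = cnj u0 * u0 + cnj u1 * u1"
    have "cnj (a*u0 + b*u1) * (a*u0 + b*u1) + cnj (c*u0 + d*u1) * (c*u0 + d*u1) = r"
      unfolding r_def using unit_id[where ca="cnj a" and cb="cnj b" and cc="cnj c" and cd="cnj d" and cp="cnj u0" and cq="cnj u1" and x=u0 and y=u1]
      using ha hb cc by simp
    hence "cnj lam * lam * r = r" unfolding r_def using e1 e2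
      by (simp add: algebra_simps)
    moreover have "r \<noteq> 0"
    proof -
      have "r = complex_of_real ((cmod u0)\<^sup>2 + (cmod u1)\<^sup>2)"
        unfolding r_def of_real_add complex_norm_square by (simp add: mult.commute)
      moreover have "(cmod u0)\<^sup>2 + (cmod u1)\<^sup>2 \<noteq> 0" using un
        by (auto simp: add_nonneg_eq_0_iff)
      ultimately show ?thesis by (metis of_real_eq_0_iff)
    qed
    ultimately have ll: "cnj lam * lam = 1" by (metis mult_1 mult_cancel_right)
    have mlam: "m = lam"
    proof -
      have "m = (cnj lam * lam) * m" using ll by simp
      also have "\<dots> = lam * (cnj lam * m)" by (simp add: algebra_simps)
      finally show ?thesis using lm by simp
    qed
    have "(a - lam) * (u0 * z1 - u1 * z0) = z1 * (a*u0 + b*u1 - lam*u0) - u1 * (a*z0 + b*z1 - lam*z0)"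
      by (simp add: algebra_simps)
    hence "(a - lam) * (u0 * z1 - u1 * z0) = 0" using e1 m mlam by simp
    hence a1: "a = lam" using indep by simp
    have "b * (u0 * z1 - u1 * z0) = u0 * (a*z0 + b*z1 - lam*z0) - z0 * (a*u0 + b*u1 - lam*u0)"
      by (simp add: algebra_simps)
    hence "b * (u0 * z1 - u1 * z0) = 0" using e1 m mlam by simp
    hence b1: "b = 0" using indep by simp
    have "c * (u0 * z1 - u1 * z0) = z1 * (c*u0 + d*u1 - lam*u1) - u1 * (c*z0 + d*z1 - lam*z1)"
      by (simp add: algebra_simps)
    hence "c * (u0 * z1 - u1 * z0) = 0" using e2 m mlam by simp
    hence c1: "c = 0" using indep by simp
    have "(d - lam) * (u0 * z1 - u1 * z0) = u0 * (c*z0 + d*z1 - lam*z1) - z0 * (c*u0 + d*u1 - lam*u1)"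
      by (simp add: algebra_simps)
    hence "(d - lam) * (u0 * z1 - u1 * z0) = 0" using e2 m mlam by simp
    hence d1: "d = lam" using indep by simp
    have ncl: "(cmod lam)\<^sup>2 = 1"
    proof -
      have "complex_of_real ((cmod lam)\<^sup>2) = lam * cnj lam"
        by (rule complex_norm_square)
      also have "\<dots> = 1" using ll by (simp add: mult.commute)
      finally show ?thesis by (metis of_real_eq_1_iff)
    qed
    have "poinc a b c d p = p" for p
    proof -
      obtain x t where p: "p = (x,t)" by (cases p)
      have "lam * x * cnj lam = x * (cnj lam * lam)" by (simp add: algebra_simps)
      then show ?thesis unfolding poinc_def p using a1 b1 c1 d1 ncl ll
        by (simp add: Let_def)
    qed
    then show False using mv by auto
  qed
  have "w0 * z1 = w1 * z0" using s0 unfolding s_def u0_def u1_def by (simp add: algebra_simps)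
  then show ?thesis using proj_eq_iff[OF wn zn] W Z by simp
qed

end
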